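(* Assume the Standing Setting. Let $\phi\colon\mathbb{R}^{\mathfrak d}\times[a,b]^d\to\mathbb{R}$ be locally bounded and measurable and assume that for all $r\in(0,\infty)$ $$\sup_{\theta,\vartheta\in\mathbb{R}^{\mathfrak d},\ \|\theta\|+\|\vartheta\|\le r,\ \theta\ne\vartheta}\ \sup_{x\in[a,b]^d}\frac{|\phi(\theta,x)-\phi(\vartheta,x)|}{\|\theta-\vartheta\|}<\infty.$$ Then (i) the map $\mathbb{R}^{\mathfrak d}\ni\theta\mapsto\int_{[a,b]^d}\phi(\theta,x)p(x)\,\lambda(\mathrm{d}x)\in\mathbb{R}$ is locally Lipschitz continuous, and (ii) for every $i\in\{1,\dots,H\}$ the map $\{\vartheta\in\mathbb{R}^{\mathfrak d}\colon i\notin\mathbf{D}^\vartheta\}\ni\theta\mapsto\int_{I_i^\theta}\phi(\theta,x)p(x)\,\lambda(\mathrm{d}x)\in\mathbb{R}$ is locally Lipschitz continuous.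
   Context: Standing Setting: Let $d,H,\mathfrak d\in\mathbb{N}$ with $\mathfrak d=dH+2H+1$, let $a\in\mathbb{R}$, $b\in(a,\infty)$, $f\in C([a,b]^d,\mathbb{R})$, and let $p\colon[a,b]^d\to[0,\infty)$ be bounded and measurable. Let $\lambda$ be Lebesgue measure on $\mathbb{R}^d$ and $\|\cdot\|$ the Euclidean norm. For $\theta=(\theta_1,\dots,\theta_{\mathfrak d})\in\mathbb{R}^{\mathfrak d}$, $i\in\{1,\dots,H\}$, $j\in\{1,\dots,d\}$ write $w^\theta_{i,j}=\theta_{(i-1)d+j}$, $b^\theta_i=\theta_{Hd+i}$, $v^\theta_i=\theta_{H(d+1)+i}$, $c^\theta=\theta_{\mathfrak d}$. Define $\mathcal N^\theta(x)=c^\theta+\sum_{i=1}^H v^\theta_i\max\{b^\theta_i+\sum_{j=1}^d w^\theta_{i,j}x_j,0\}$ for $x\in\mathbb{R}^d$ and the risk $\mathcal L(\theta)=\int_{[a,b]^d}(f(y)-\mathcal N^\theta(y))^2p(y)\,\lambda(\mathrm{d}y)$. Let $\mathfrak R_r\in C^1(\mathbb{R},\mathbb{R})$, $r\in\mathbb{N}$, satisfy for all $x\in\mathbb{R}$ that $\lim_{r\to\infty}\big(|\mathfrak R_r(x)-\max\{x,0\}|+|(\mathfrak R_r)'(x)-\mathbb 1_{(0,\infty)}(x)|\big)=0$ and $\sup_{r\in\mathbb{N}}\sup_{y\in[-|x|,|x|]}|(\mathfrak R_r)'(y)|<\infty$, and let $\mathfrak L_r(\theta)=\int_{[a,b]^d}\big(f(y)-c^\theta-\sum_{i=1}^H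 v^\theta_i\,\mathfrak R_r(b^\theta_i+\sum_{j=1}^d w^\theta_{i,j}y_j)\big)^2p(y)\,\lambda(\mathrm{d}y)$. Let $\mathcal G=(\mathcal G_1,\dots,\mathcal G_{\mathfrak d})\colon\mathbb{R}^{\mathfrak d}\to\mathbb{R}^{\mathfrak d}$ satisfy $\mathcal G(\theta)=\lim_{r\to\infty}(\nabla\mathfrak L_r)(\theta)$ for every $\theta$ at which this limit exists. For $\theta\in\mathbb{R}^{\mathfrak d}$, $i\in\{1,\dots,H\}$ let $I_i^\theta=\{x\in[a,b]^d\colon b^\theta_i+\sum_{j=1}^d w^\theta_{i,j}x_j>0\}$ and let $\mathbf D^\theta=\{i\in\{1,\dots,H\}\colon |b^\theta_i|+\sum_{j=1}^d|w^\theta_{i,j}|=0\}$ (the set of degenerate hidden neurons). For $\varepsilon>0$, $B_\varepsilon(\theta)=\{\vartheta\in\mathbb{R}^{\mathfrak d}\colon\|\theta-\vartheta\|<\varepsilon\}$. *)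

theory Defs
  imports "HOL-Analysis.Analysis"
begin

text \<open>Parameter vectors theta in R^{dH+2H+1}, arranged as (w, b, v, c) with
  w :: real^d^H (w $ i $ j = w_{i,j}), b, v :: real^H, c :: real.
  The product norm equals the Euclidean norm of the flattened vector.\<close>
type_synonym ('d, 'h) params = "(real^'d^'h) \<times> (real^'h) \<times> (real^'h) \<times> real"

definition wgt :: "('d::finite, 'h::finite) params \<Rightarrow> 'h \<Rightarrow> 'd \<Rightarrow> real"
  where "wgt \<theta> i j = (fst \<theta>) $ i $ j"

definition bias :: "('d::finite, 'h::finite) params \<Rightarrow> 'h \<Rightarrow> real"
  where "bias \<theta> i = (fst (snd \<theta>)) $ i"

definition cube :: "real \<Rightarrow> real \<Rightarrow> (real^'d::finite) set"
  where "cube a b = cbox (\<chi> j. a) (\<chi> j. b)"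

definition active_set :: "real \<Rightarrow> real \<Rightarrow> ('d::finite, 'h::finite) params \<Rightarrow> 'h \<Rightarrow> (real^'d) set"
  where "active_set a b \<theta> i = {x \<in> cube a b. bias \<theta> i + (\<Sum>j\<in>UNIV. wgt \<theta> i j * x $ j) > 0}"

definition degenerate :: "('d::finite, 'h::finite) params \<Rightarrow> 'h set"
  where "degenerate \<theta> = {i. \<bar>bias \<theta> i\<bar> + (\<Sum>j\<in>UNIV. \<bar>wgt \<theta> i j\<bar>) = 0}"

definition locally_lipschitz_on :: "'a::metric_space set \<Rightarrow> ('a \<Rightarrow> 'b::metric_space) \<Rightarrow> bool"
  where "locally_lipschitz_on S F \<longleftrightarrow>
    (\<forall>x\<in>S. \<exists>e>0. \<exists>L. L-lipschitz_on (ball x e \<inter> S) F)"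

end

theory Submission
  imports Defs
begin

lemma slab_lmeas:
  fixes w :: "real^'d::finite" and a b c \<delta> :: real
  shows "{x \<in> cube a b. \<bar>c + (\<Sum>k\<in>UNIV. w$k * x$k)\<bar> \<le> \<delta>} \<in> lmeasurable"
proof -
  have cl: "closed {x::real^'d. \<bar>c + (\<Sum>k\<in>UNIV. w$k * x$k)\<bar> \<le> \<delta>}"
    by (intro closed_Collect_le continuous_intros)
  have eq: "{x \<in> cube a b. \<bar>c + (\<Sum>k\<in>UNIV. w$k * x$k)\<bar> \<le> \<delta>}
     = cbox (\<chi> j. a) (\<chi> j. b) \<inter> {x::real^'d. \<bar>c + (\<Sum>k\<in>UNIV. w$k * x$k)\<bar> \<le> \<delta>}"
    unfolding cube_def by blast
  have "compact {x \<in> cube a b. \<bar>c + (\<Sum>k\<in>UNIV. w$k * x$k)\<bar> \<le> \<delta>}"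
    unfolding eq by (rule compact_Int_closed[OF compact_cbox cl])
  then show ?thesis by (rule lmeasurable_compact)
qed

lemma measure_cbox_leb:
  fixes lo hi :: "real^'d::finite"
  assumes "\<And>k. lo$k \<le> hi$k"
  shows "measure lebesgue (cbox lo hi) = (\<Prod>k\<in>UNIV. hi$k - lo$k)"
proof -
  have "lo \<in> cbox lo hi" using assms by (simp add: mem_box_cart)
  then have ne: "cbox lo hi \<noteq> {}" by blast
  have "cbox lo hi \<in> sets lborel" by simp
  then have "measure lebesgue (cbox lo hi) = measure lborel (cbox lo hi)" by (rule measure_completion)
  then show ?thesis using content_cbox_cart[OF ne] by simp
qed

lemma slab_pack:
  fixes w :: "real^'d::finite" and a b c \<delta> t :: real and N :: nat
  assumes wj: "w$j \<noteq> 0" and ab: "a < b" and d0: "0 \<le> \<delta>" and t: "0 < t"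
    and tw: "2*\<delta> < t*\<bar>w$j\<bar>" and N: "0 < N"
  shows "measure lebesgue {x \<in> cube a b. \<bar>c + (\<Sum>k\<in>UNIV. w$k * x$k)\<bar> \<le> \<delta>}
          \<le> (b-a)^(CARD('d)-1) * ((b-a)/real N + t)"
proof -
  define S where "S = {x \<in> cube a b. \<bar>c + (\<Sum>k\<in>UNIV. w$k * x$k)\<bar> \<le> \<delta>}"
  define e :: "real^'d" where "e = axis j 1"
  define T where "T = (\<lambda>k::nat. (+) ((real k * t) *\<^sub>R e) ` S)"
  define P where "P = (b-a)^(CARD('d)-1)"
  have shift: "(s *\<^sub>R e + x)$l = x$l + (if l = j then s else 0)" for s x l
    unfolding e_def by (simp add: axis_def)
  have wshift: "(\<Sum>k\<in>UNIV. w$k * (s *\<^sub>R e + x)$k) = (\<Sum>k\<in>UNIV. w$k * x$k) + s * w$j" for s x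
  proof -
    have "(\<Sum>k\<in>UNIV. w$k * (s *\<^sub>R e + x)$k) = (\<Sum>k\<in>UNIV. w$k * x$k + (if k = j then s * w$j else 0))"
      by (rule sum.cong) (auto simp: e_def axis_def algebra_simps)
    then show ?thesis by (simp add: sum.distrib)
  qed
  have Sl: "S \<in> lmeasurable" unfolding S_def by (rule slab_lmeas)
  have Tl: "T k \<in> lmeasurable" for k unfolding T_def by (rule measurable_translation[OF Sl])
  have mT: "measure lebesgue (T k) = measure lebesgue S" for k unfolding T_def by (rule measure_translation)
  have disj: "disjoint_family_on T {..<N}"
    unfolding disjoint_family_on_def
  proof (intro ballI impI)
    fix k m :: nat assume km: "k \<noteq> m"
    show "T k \<inter> T m = {}"
    proof (rule ccontr)
      assume "T k \<inter> T m \<noteq> {}"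
      then obtain x x' where x: "x \<in> S" "x' \<in> S" and eq: "(real k * t) *\<^sub>R e + x = (real m * t) *\<^sub>R e + x'"
        unfolding T_def by auto
      have "(\<Sum>l\<in>UNIV. w$l * ((real k * t) *\<^sub>R e + x)$l) = (\<Sum>l\<in>UNIV. w$l * ((real m * t) *\<^sub>R e + x')$l)"
        using eq by simp
      then have v: "(\<Sum>l\<in>UNIV. w$l * x$l) + real k * t * w$j = (\<Sum>l\<in>UNIV. w$l * x'$l) + real m * t * w$j"
        unfolding wshift .
      have b1: "\<bar>c + (\<Sum>l\<in>UNIV. w$l * x$l)\<bar> \<le> \<delta>" "\<bar>c + (\<Sum>l\<in>UNIV. w$l * x'$l)\<bar> \<le> \<delta>"
        using x unfolding S_def by auto
      have "(real k - real m) * t * w$j = (\<Sum>l\<in>UNIV. w$l * x'$l) - (\<Sum>l\<in>UNIV. w$l * x$l)"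
        using v by (simp add: algebra_simps)
      then have le: "\<bar>(real k - real m) * t * w$j\<bar> \<le> 2*\<delta>" using b1 by (simp add: abs_le_iff)
      have km1: "1 \<le> \<bar>real k - real m\<bar>" using km by linarith
      have "t*\<bar>w$j\<bar> \<le> \<bar>real k - real m\<bar> * (t*\<bar>w$j\<bar>)"
        using mult_right_mono[OF km1, of "t*\<bar>w$j\<bar>"] t by simp
      also have "\<dots> = \<bar>(real k - real m) * t * w$j\<bar>" using t by (simp add: abs_mult)
      finally show False using le tw by linarith
    qed
  qed
  define lo :: "real^'d" where "lo = (\<chi> k. a)"
  define hi :: "real^'d" where "hi = (\<chi> k. if k = j then b + real N * t else b)"
  have sub: "(\<Union>k\<in>{..<N}. T k) \<subseteq> cbox lo hi"
  proof
    fix y assume "y \<in> (\<Union>k\<in>{..<N}. T k)"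
    then obtain k x where k: "k < N" and x: "x \<in> S" and y: "y = (real k * t) *\<^sub>R e + x"
      unfolding T_def by auto
    have xc: "a \<le> x$l \<and> x$l \<le> b" for l using x unfolding S_def cube_def mem_box_cart by auto
    have "real k * t \<le> real N * t" using k t by (intro mult_right_mono) auto
    moreover have "0 \<le> real k * t" using t by simp
    ultimately show "y \<in> cbox lo hi" unfolding mem_box_cart y shift lo_def hi_def
      using xc by (auto simp: add_increasing2 add_mono)
  qed
  have Ul: "(\<Union>k\<in>{..<N}. T k) \<in> sets lebesgue" using Tl by (intro sets.finite_UN) auto
  have "real N * measure lebesgue S = (\<Sum>k\<in>{..<N}. measure lebesgue (T k))" by (simp add: mT)
  also have "\<dots> = measure lebesgue (\<Union>k\<in>{..<N}. T k)"
  proof (rule measure_finite_Union[symmetric])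
    show "T ` {..<N} \<subseteq> sets lebesgue" using Tl by (auto dest: fmeasurableD)
    show "emeasure lebesgue (T k) \<noteq> \<infinity>" for k
      using Tl[of k] unfolding fmeasurable_def by (auto dest: order.strict_implies_not_eq)
  qed (use disj in auto)
  also have "\<dots> \<le> measure lebesgue (cbox lo hi)"
    by (rule measure_mono_fmeasurable[OF sub Ul]) simp
  also have "\<dots> = (\<Prod>k\<in>UNIV. hi$k - lo$k)"
    by (rule measure_cbox_leb) (use ab t in \<open>auto simp: lo_def hi_def intro!: add_increasing2\<close>)
  also have "\<dots> = (hi$j - lo$j) * (\<Prod>k\<in>UNIV-{j}. hi$k - lo$k)"
    by (rule prod.remove) auto
  also have "(\<Prod>k\<in>UNIV-{j}. hi$k - lo$k) = (\<Prod>k\<in>UNIV-{j}. b - a)"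
    by (rule prod.cong) (auto simp: lo_def hi_def)
  also have "\<dots> = P" by (simp add: card_Diff_singleton P_def)
  finally have "real N * measure lebesgue S \<le> (b - a + real N * t) * P" by (simp add: lo_def hi_def algebra_simps)
  then have "measure lebesgue S \<le> (b - a + real N * t) * P / real N" using N by (simp add: field_simps)
  also have "\<dots> = P * ((b-a)/real N + t)" using N by (simp add: field_simps)
  finally show ?thesis unfolding S_def P_def .
qed

lemma slab:
  fixes w :: "real^'d::finite" and a b c \<delta> :: real
  assumes wj: "w$j \<noteq> 0" and ab: "a < b" and d0: "0 \<le> \<delta>"
  shows "measure lebesgue {x \<in> cube a b. \<bar>c + (\<Sum>k\<in>UNIV. w$k * x$k)\<bar> \<le> \<delta>}
          \<le> 2*\<delta>*(b-a)^(CARD('d)-1) / \<bar>w$j\<bar>"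
proof (rule ccontr)
  define S where "S = {x \<in> cube a b. \<bar>c + (\<Sum>k\<in>UNIV. w$k * x$k)\<bar> \<le> \<delta>}"
  define P where "P = (b-a)^(CARD('d)-1)"
  define T0 where "T0 = 2*\<delta> / \<bar>w$j\<bar>"
  have P: "0 < P" unfolding P_def using ab by simp
  have T0: "0 \<le> T0" unfolding T0_def using d0 by simp
  assume "\<not> ?thesis"
  then have gt: "P * T0 < measure lebesgue S" unfolding S_def P_def T0_def by (simp add: field_simps)
  define g where "g = measure lebesgue S - P * T0"
  have g: "0 < g" using gt unfolding g_def by simp
  define t where "t = T0 + g / (2*P)"
  have t: "0 < t" unfolding t_def using T0 g P by (simp add: add_nonneg_pos)
  have tw: "2*\<delta> < t*\<bar>w$j\<bar>"
  proof -
    have "2*\<delta> = T0 * \<bar>w$j\<bar>" unfolding T0_def using wj by simp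
    also have "\<dots> < t * \<bar>w$j\<bar>" unfolding t_def using g P wj by (intro mult_strict_right_mono) auto
    finally show ?thesis .
  qed
  obtain N :: nat where N: "2 * P * (b-a) / g < real N" using reals_Archimedean2 by blast
  have N0: "0 < N" using N P ab g
    by (metis divide_pos_pos le_less_trans less_eq_real_def mult_pos_pos of_nat_0_less_iff zero_less_mult_iff diff_gt_0_iff_gt zero_less_numeral)
  have "measure lebesgue S \<le> P * ((b-a)/real N + t)"
    unfolding S_def P_def by (rule slab_pack[OF wj ab d0 t tw N0])
  also have "P * ((b-a)/real N) < g/2"
  proof -
    have "2 * P * (b-a) < g * real N" using N g by (simp add: pos_divide_less_eq mult.commute)
    then show ?thesis using N0 by (simp add: field_simps)
  qed
  then have "P * ((b-a)/real N + t) < g/2 + P * t" by (simp add: distrib_left)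
  also have "g/2 + P * t = P * T0 + g" unfolding t_def using P by (simp add: field_simps)
  also have "\<dots> = measure lebesgue S" unfolding g_def by simp
  finally show False by simp
qed

lemma key:
  fixes f g p :: "real^'d::finite \<Rightarrow> real"
  assumes C: "C \<in> sets lborel" "emeasure lborel C < \<infinity>"
    and A: "A1 \<subseteq> C" "A2 \<subseteq> C" "A1 \<in> sets lborel" "A2 \<in> sets lborel"
    and mf: "(\<lambda>x. indicator C x * f x) \<in> borel_measurable lborel"
    and mg: "(\<lambda>x. indicator C x * g x) \<in> borel_measurable lborel"
    and mp: "(\<lambda>x. indicator C x * p x) \<in> borel_measurable lborel"
    and D: "\<forall>x\<in>C. \<bar>f x - g x\<bar> \<le> D" and Bg: "\<forall>x\<in>C. \<bar>g x\<bar> \<le> Bg"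
    and P: "\<forall>x\<in>C. 0 \<le> p x \<and> p x \<le> Bp"
  shows "\<bar>(LINT x:A1|lborel. f x * p x) - (LINT x:A2|lborel. g x * p x)\<bar>
     \<le> D*Bp*measure lborel C + Bg*Bp*measure lborel ((A1-A2) \<union> (A2-A1))"
proof -
  define E where "E = (A1-A2) \<union> (A2-A1)"
  have E: "E \<in> sets lborel" "E \<subseteq> C" using A unfolding E_def by auto
  have Efin: "emeasure lborel E < \<infinity>"
    using emeasure_mono[OF E(2) C(1)] C(2) by (simp add: top.extremum_strict less_le_trans)
  have iC: "integrable lborel (indicat_real C)" by (rule integrable_real_indicator[OF C])
  have iE: "integrable lborel (indicat_real E)" by (rule integrable_real_indicator[OF E(1) Efin])
  have F: "integrable lborel (\<lambda>x. indicator A x *\<^sub>R (h x * p x))"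
    if "A \<subseteq> C" "A \<in> sets lborel" "(\<lambda>x. indicator C x * h x) \<in> borel_measurable lborel"
       "\<forall>x\<in>C. \<bar>h x\<bar> \<le> K" for A h K
  proof -
    have eq: "(\<lambda>x. indicator A x *\<^sub>R (h x * p x))
       = (\<lambda>x. indicator A x * (indicator C x * h x) * (indicator C x * p x))"
      using that(1) by (auto simp: indicator_def fun_eq_iff)
    have m: "(\<lambda>x. indicator A x *\<^sub>R (h x * p x)) \<in> borel_measurable lborel"
      unfolding eq using that(2,3) mp by measurable
    show ?thesis
    proof (rule Bochner_Integration.integrable_bound[OF _ m])
      show "integrable lborel (\<lambda>x. indicator C x * (\<bar>K\<bar> * \<bar>Bp\<bar>))"
        using iC by (rule integrable_mult_left)
      show "AE x in lborel. norm (indicator A x *\<^sub>R (h x * p x)) \<le> norm (indicator C x * (\<bar>K\<bar> * \<bar>Bp\<bar>))"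
      proof (rule AE_I2)
        fix x
        show "norm (indicator A x *\<^sub>R (h x * p x)) \<le> norm (indicator C x * (\<bar>K\<bar> * \<bar>Bp\<bar>))"
        proof (cases "x \<in> A")
          case True
          then have xC: "x \<in> C" using that(1) by auto
          have "\<bar>h x\<bar> * \<bar>p x\<bar> \<le> \<bar>K\<bar> * \<bar>Bp\<bar>"
            using that(4) P xC by (intro mult_mono) auto
          then show ?thesis using True xC by (simp add: abs_mult)
        qed simp
      qed
    qed
  qed
  have Bf: "\<forall>x\<in>C. \<bar>f x\<bar> \<le> D + Bg" using D Bg by force
  have i1: "integrable lborel (\<lambda>x. indicator A1 x *\<^sub>R (f x * p x))" using F[OF A(1) A(3) mf Bf] .
  have i2: "integrable lborel (\<lambda>x. indicator A2 x *\<^sub>R (g x * p x))" using F[OF A(2) A(4) mg Bg] .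
  have ib: "integrable lborel (\<lambda>x. indicator C x * (D*Bp) + indicator E x * (Bg*Bp))"
    using iC iE by (intro Bochner_Integration.integrable_add integrable_mult_left)
  have "(LINT x:A1|lborel. f x * p x) - (LINT x:A2|lborel. g x * p x)
     = (LINT x|lborel. indicator A1 x *\<^sub>R (f x * p x) - indicator A2 x *\<^sub>R (g x * p x))"
    unfolding set_lebesgue_integral_def by (rule Bochner_Integration.integral_diff[OF i1 i2, symmetric])
  also have "\<bar>\<dots>\<bar> \<le> (LINT x|lborel. indicator C x * (D*Bp) + indicator E x * (Bg*Bp))"
  proof (rule integral_abs_bound_integral[OF Bochner_Integration.integrable_diff[OF i1 i2] ib])
    fix x
    show "\<bar>indicator A1 x *\<^sub>R (f x * p x) - indicator A2 x *\<^sub>R (g x * p x)\<bar>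
       \<le> indicator C x * (D*Bp) + indicator E x * (Bg*Bp)"
    proof (cases "x \<in> C")
      case False then show ?thesis using A E(2) by (auto simp: indicator_def)
    next
      case xC: True
      have p0: "0 \<le> p x" "p x \<le> Bp" using P xC by auto
      have d: "\<bar>f x - g x\<bar> \<le> D" "\<bar>g x\<bar> \<le> Bg" using D Bg xC by auto
      have D0: "0 \<le> D" using d(1) by linarith
      have B0: "0 \<le> Bg" using d(2) by linarith
      have m1: "\<bar>f x - g x\<bar> * p x \<le> D * Bp" using d p0 D0 by (intro mult_mono) auto
      have m2: "\<bar>g x\<bar> * p x \<le> Bg * Bp" using d p0 B0 by (intro mult_mono) auto
      have m3: "0 \<le> D * Bp" using D0 p0 by simp
      have m4: "0 \<le> Bg * Bp" using B0 p0 by simp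
      have fg: "\<bar>f x * p x - g x * p x\<bar> = \<bar>f x - g x\<bar> * p x" using p0
        by (simp add: left_diff_distrib[symmetric] abs_mult)
      have "\<bar>f x\<bar> \<le> \<bar>f x - g x\<bar> + \<bar>g x\<bar>" by (metis abs_triangle_ineq diff_add_cancel)
      then have "\<bar>f x\<bar> * p x \<le> (\<bar>f x - g x\<bar> + \<bar>g x\<bar>) * p x" by (rule mult_right_mono) (use p0 in simp)
      then have ff: "\<bar>f x * p x\<bar> \<le> \<bar>f x - g x\<bar> * p x + \<bar>g x\<bar> * p x" using p0
        by (simp add: abs_mult distrib_right)
      have gg: "\<bar>g x * p x\<bar> = \<bar>g x\<bar> * p x" using p0 by (simp add: abs_mult)
      show ?thesis using xC m1 m2 m3 m4 fg ff gg unfolding E_def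
        by (cases "x \<in> A1"; cases "x \<in> A2"; simp add: indicator_def; linarith)
    qed
  qed
  also have "\<dots> = D*Bp*measure lborel C + Bg*Bp*measure lborel E"
  proof -
    have "(LINT x|lborel. indicator C x * (D*Bp) + indicator E x * (Bg*Bp))
       = (LINT x|lborel. indicator C x * (D*Bp)) + (LINT x|lborel. indicator E x * (Bg*Bp))"
      by (rule Bochner_Integration.integral_add) (use iC iE in \<open>auto intro: integrable_mult_left\<close>)
    also have "(LINT x|lborel. indicator C x * (D*Bp)) = measure lborel C * (D*Bp)"
      by (simp only: integral_mult_left_zero integral_indicator) simp
    also have "(LINT x|lborel. indicator E x * (Bg*Bp)) = measure lborel E * (Bg*Bp)"
      by (simp only: integral_mult_left_zero integral_indicator) simp
    finally show ?thesis by (simp only: mult.commute mult.left_commute)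
  qed
  finally show ?thesis unfolding E_def .
qed

lemma cube_sets: "cube a b \<in> sets lborel" "emeasure lborel (cube a b) < \<infinity>"
  unfolding cube_def by (simp add: cbox_borel) (rule emeasure_lborel_cbox_finite)

lemma cube_coord: "x \<in> cube a b \<Longrightarrow> \<bar>x$j\<bar> \<le> \<bar>a\<bar> + \<bar>b\<bar>"
proof -
  assume "x \<in> cube a b"
  then have h: "a \<le> x$j \<and> x$j \<le> b" unfolding cube_def mem_box_cart by simp
  have "a \<le> \<bar>a\<bar>" "-a \<le> \<bar>a\<bar>" "b \<le> \<bar>b\<bar>" "-b \<le> \<bar>b\<bar>" "0 \<le> \<bar>a\<bar>" "0 \<le> \<bar>b\<bar>" by auto
  then show ?thesis unfolding abs_le_iff using h by linarith
qed

lemma my_norm_fst: "norm (fst z) \<le> norm z" by (metis prod.collapse norm_fst_le)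
lemma my_norm_snd: "norm (snd z) \<le> norm z" by (metis prod.collapse norm_snd_le)

lemma bias_diff: "\<bar>bias \<theta> i - bias \<eta> i\<bar> \<le> norm (\<theta> - \<eta>)"
proof -
  have "bias \<theta> i - bias \<eta> i = (fst (snd (\<theta> - \<eta>))) $ i" by (simp add: bias_def)
  moreover have "\<bar>(fst (snd (\<theta> - \<eta>))) $ i\<bar> \<le> norm (\<theta> - \<eta>)"
    by (meson component_le_norm_cart my_norm_fst my_norm_snd order_trans)
  ultimately show ?thesis by simp
qed

lemma wgt_diff: "\<bar>wgt \<theta> i j - wgt \<eta> i j\<bar> \<le> norm (\<theta> - \<eta>)"
proof -
  have "wgt \<theta> i j - wgt \<eta> i j = (fst (\<theta> - \<eta>)) $ i $ j" by (simp add: wgt_def)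
  moreover have "\<bar>(fst (\<theta> - \<eta>)) $ i $ j\<bar> \<le> norm (\<theta> - \<eta>)"
    by (rule order_trans[OF component_le_norm_cart order_trans[OF Finite_Cartesian_Product.norm_nth_le my_norm_fst]])
  ultimately show ?thesis by simp
qed

lemma gdiff:
  fixes \<theta> \<eta> :: "('d::finite, 'h::finite) params"
  assumes x: "x \<in> cube a b"
  shows "\<bar>(bias \<theta> i + (\<Sum>j\<in>UNIV. wgt \<theta> i j * x $ j)) - (bias \<eta> i + (\<Sum>j\<in>UNIV. wgt \<eta> i j * x $ j))\<bar>
     \<le> (1 + real CARD('d) * (\<bar>a\<bar> + \<bar>b\<bar>)) * norm (\<theta> - \<eta>)"
proof -
  let ?n = "norm (\<theta> - \<eta>)"
  have "\<bar>(\<Sum>j\<in>UNIV. wgt \<theta> i j * x $ j) - (\<Sum>j\<in>UNIV. wgt \<eta> i j * x $ j)\<bar>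
      = \<bar>\<Sum>j\<in>UNIV. (wgt \<theta> i j - wgt \<eta> i j) * x $ j\<bar>"
    by (simp add: sum_subtractf left_diff_distrib)
  also have "\<dots> \<le> (\<Sum>j\<in>UNIV. \<bar>(wgt \<theta> i j - wgt \<eta> i j) * x $ j\<bar>)" by (rule sum_abs)
  also have "\<dots> \<le> (\<Sum>j\<in>(UNIV::'d set). ?n * (\<bar>a\<bar> + \<bar>b\<bar>))"
  proof (rule sum_mono)
    fix j
    show "\<bar>(wgt \<theta> i j - wgt \<eta> i j) * x $ j\<bar> \<le> ?n * (\<bar>a\<bar> + \<bar>b\<bar>)"
      unfolding abs_mult by (intro mult_mono wgt_diff cube_coord[OF x]) auto
  qed
  also have "\<dots> = real CARD('d) * (\<bar>a\<bar> + \<bar>b\<bar>) * ?n" by simp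
  finally have s: "\<bar>(\<Sum>j\<in>UNIV. wgt \<theta> i j * x $ j) - (\<Sum>j\<in>UNIV. wgt \<eta> i j * x $ j)\<bar>
      \<le> real CARD('d) * (\<bar>a\<bar> + \<bar>b\<bar>) * ?n" .
  have "\<bar>bias \<theta> i - bias \<eta> i\<bar> \<le> ?n" by (rule bias_diff)
  then show ?thesis using s by (simp add: algebra_simps abs_le_iff)
qed

lemma act_sets:
  fixes \<theta> :: "('d::finite, 'h::finite) params"
  shows "active_set a b \<theta> i \<in> sets lborel"
proof -
  have "open {x::real^'d. 0 < bias \<theta> i + (\<Sum>j\<in>UNIV. wgt \<theta> i j * x $ j)}"
    by (intro open_Collect_less continuous_intros)
  then have o: "{x::real^'d. 0 < bias \<theta> i + (\<Sum>j\<in>UNIV. wgt \<theta> i j * x $ j)} \<in> sets borel" by (rule borel_open)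
  have c: "(cube a b :: (real^'d) set) \<in> sets borel" using cube_sets(1)[of a b] by (simp only: sets_lborel)
  have eq: "active_set a b \<theta> i = cube a b \<inter> {x::real^'d. 0 < bias \<theta> i + (\<Sum>j\<in>UNIV. wgt \<theta> i j * x $ j)}"
    unfolding active_set_def by blast
  show ?thesis unfolding eq sets_lborel by (rule sets.Int[OF c o])
qed

lemma sec_meas:
  fixes \<phi> :: "('d::finite, 'h::finite) params \<Rightarrow> real^'d \<Rightarrow> real"
  assumes phi_meas: "(\<lambda>z. \<phi> (fst z) (snd z)) \<in> borel_measurable (restrict_space borel (UNIV \<times> cube a b))"
  shows "(\<lambda>x. indicator (cube a b) x * \<phi> \<theta> x) \<in> borel_measurable lborel"
proof -
  have "(\<lambda>x. (\<theta>, x)) \<in> borel \<rightarrow>\<^sub>M borel"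
    by (intro borel_measurable_continuous_onI continuous_intros)
  then have "(\<lambda>x. (\<theta>, x)) \<in> restrict_space borel (cube a b) \<rightarrow>\<^sub>M restrict_space borel (UNIV \<times> cube a b)"
    by (rule measurable_restrict_space3) auto
  from measurable_comp[OF this phi_meas]
  have "(\<lambda>x. \<phi> \<theta> x) \<in> borel_measurable (restrict_space borel (cube a b))" by (simp add: o_def)
  then have "(\<lambda>x. indicator (cube a b) x *\<^sub>R \<phi> \<theta> x) \<in> borel_measurable borel"
    by (subst (asm) borel_measurable_restrict_space_iff) (use cube_sets(1) in auto)
  then show ?thesis by (simp add: measurable_cong_sets[OF sets_lborel refl])
qed

lemma delta_meas:
  fixes \<theta>0 :: "('d::finite, 'h::finite) params" and i :: 'h
  assumes ab: "a < b" and nd: "i \<notin> degenerate \<theta>0"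
  shows "\<exists>\<epsilon>>0. \<exists>Cm\<ge>0. \<forall>\<theta>\<in>ball \<theta>0 \<epsilon>. \<forall>\<eta>\<in>ball \<theta>0 \<epsilon>.
     measure lborel ((active_set a b \<theta> i - active_set a b \<eta> i) \<union> (active_set a b \<eta> i - active_set a b \<theta> i))
       \<le> Cm * dist \<theta> \<eta>"
proof -
  define K where "K = 1 + real CARD('d) * (\<bar>a\<bar> + \<bar>b\<bar>)"
  have K1: "1 \<le> K" unfolding K_def by simp
  define g where "g = (\<lambda>\<theta> x. bias \<theta> i + (\<Sum>j\<in>UNIV. wgt \<theta> i j * (x::real^'d) $ j))"
  have gd: "\<bar>g \<theta> x - g \<eta> x\<bar> \<le> K * dist \<theta> \<eta>" if "x \<in> cube a b" for \<theta> \<eta> x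
    using gdiff[OF that, of \<theta> i \<eta>] unfolding g_def K_def dist_norm .
  have act: "active_set a b \<theta> i = {x \<in> cube a b. 0 < g \<theta> x}" for \<theta>
    unfolding active_set_def g_def ..
  have "\<not> (\<bar>bias \<theta>0 i\<bar> + (\<Sum>j\<in>UNIV. \<bar>wgt \<theta>0 i j\<bar>) = 0)" using nd unfolding degenerate_def by simp
  then have bw: "(\<exists>j. wgt \<theta>0 i j \<noteq> 0) \<or> bias \<theta>0 i \<noteq> 0" by auto
  show ?thesis
  proof (cases "\<exists>j. wgt \<theta>0 i j \<noteq> 0")
    case True
    then obtain j where j: "wgt \<theta>0 i j \<noteq> 0" by blast
    define w0 where "w0 = \<bar>wgt \<theta>0 i j\<bar>"
    have w0: "0 < w0" using j unfolding w0_def by simp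
    define P where "P = (b-a)^(CARD('d)-1)"
    have P0: "0 \<le> P" unfolding P_def using ab by simp
    show ?thesis
    proof (rule exI[of _ "w0/2"], intro conjI exI[of _ "4*K*P/w0"] ballI)
      show "0 < w0/2" using w0 by simp
      show "0 \<le> 4*K*P/w0" using w0 K1 P0 by simp
      fix \<theta> \<eta> assume th: "\<theta> \<in> ball \<theta>0 (w0/2)" and et: "\<eta> \<in> ball \<theta>0 (w0/2)"
      have "\<bar>wgt \<theta> i j - wgt \<theta>0 i j\<bar> \<le> norm (\<theta> - \<theta>0)" by (rule wgt_diff)
      moreover have "norm (\<theta> - \<theta>0) < w0/2" using th by (simp add: dist_norm norm_minus_commute)
      ultimately have wth: "w0/2 < \<bar>wgt \<theta> i j\<bar>" unfolding w0_def by linarith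
      define \<delta> where "\<delta> = K * dist \<theta> \<eta>"
      have d0: "0 \<le> \<delta>" unfolding \<delta>_def using K1 by simp
      define w :: "real^'d" where "w = (\<chi> k. wgt \<theta> i k)"
      define S where "S = {x \<in> cube a b. \<bar>bias \<theta> i + (\<Sum>k\<in>UNIV. w$k * x$k)\<bar> \<le> \<delta>}"
      define E where "E = (active_set a b \<theta> i - active_set a b \<eta> i) \<union> (active_set a b \<eta> i - active_set a b \<theta> i)"
      have Eb: "E \<in> sets lborel" unfolding E_def using act_sets by blast
      have ES: "E \<subseteq> S"
      proof
        fix x assume "x \<in> E"
        then have xc: "x \<in> cube a b" and sg: "(0 < g \<theta> x \<and> \<not> 0 < g \<eta> x) \<or> (0 < g \<eta> x \<and> \<not> 0 < g \<theta> x)"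
          unfolding E_def act by auto
        have "\<bar>g \<theta> x - g \<eta> x\<bar> \<le> \<delta>" using gd[OF xc] unfolding \<delta>_def .
        then have "\<bar>g \<theta> x\<bar> \<le> \<delta>" using sg by (auto simp: abs_le_iff)
        then show "x \<in> S" using xc unfolding S_def g_def w_def by simp
      qed
      have "measure lborel E = measure lebesgue E" using Eb by (simp add: measure_completion)
      also have "\<dots> \<le> measure lebesgue S"
        using ES Eb slab_lmeas[of a b "bias \<theta> i" w \<delta>] unfolding S_def
        by (intro measure_mono_fmeasurable) auto
      also have "\<dots> \<le> 2*\<delta>*P / \<bar>w$j\<bar>"
        unfolding S_def P_def using slab[of w j a b \<delta> "bias \<theta> i"] wth w0 ab d0 unfolding w_def by simp
      also have "\<dots> \<le> 2*\<delta>*P / (w0/2)"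
        using wth w0 d0 P0 unfolding w_def by (intro divide_left_mono) auto
      also have "\<dots> = 4*K*P/w0 * dist \<theta> \<eta>" unfolding \<delta>_def by (simp add: field_simps)
      finally show "measure lborel ((active_set a b \<theta> i - active_set a b \<eta> i) \<union> (active_set a b \<eta> i - active_set a b \<theta> i))
       \<le> 4*K*P/w0 * dist \<theta> \<eta>" unfolding E_def .
    qed
  next
      case False
      then have b0: "bias \<theta>0 i \<noteq> 0" using bw by blast
      from False have wz: "\<And>j. wgt \<theta>0 i j = 0" by auto
      define \<epsilon> where "\<epsilon> = \<bar>bias \<theta>0 i\<bar> / (2*K)"
      have e0: "0 < \<epsilon>" unfolding \<epsilon>_def using b0 K1 by simp
      have same: "active_set a b \<theta> i = active_set a b \<theta>0 i" if th: "\<theta> \<in> ball \<theta>0 \<epsilon>" for \<theta>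
      proof -
        have "(0 < g \<theta> x) = (0 < g \<theta>0 x)" if xc: "x \<in> cube a b" for x
        proof -
          have g0: "g \<theta>0 x = bias \<theta>0 i" unfolding g_def using wz by simp
          have "\<bar>g \<theta> x - g \<theta>0 x\<bar> \<le> K * dist \<theta> \<theta>0" by (rule gd[OF xc])
          also have "K * dist \<theta> \<theta>0 < K * \<epsilon>" using th K1 by (simp add: dist_commute)
          also have "K * \<epsilon> = \<bar>bias \<theta>0 i\<bar> / 2" unfolding \<epsilon>_def using K1 by simp
          finally show ?thesis unfolding g0 by (auto simp: abs_less_iff abs_if split: if_splits)
        qed
        then show ?thesis unfolding act by auto
      qed
      show ?thesis
      proof (rule exI[of _ \<epsilon>], intro conjI exI[of _ 0] ballI)
        show "0 < \<epsilon>" by (rule e0)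
        fix \<theta> \<eta> assume "\<theta> \<in> ball \<theta>0 \<epsilon>" "\<eta> \<in> ball \<theta>0 \<epsilon>"
        then show "measure lborel ((active_set a b \<theta> i - active_set a b \<eta> i) \<union> (active_set a b \<eta> i - active_set a b \<theta> i))
          \<le> 0 * dist \<theta> \<eta>" using same by simp
      qed simp
  qed
qed

theorem corollary2p6:
  fixes a b :: real
    and p :: "real^'d::finite \<Rightarrow> real"
    and \<phi> :: "('d, 'h::finite) params \<Rightarrow> real^'d \<Rightarrow> real"
  assumes ab: "a < b"
    and p_nonneg: "\<forall>x\<in>cube a b. 0 \<le> p x"
    and p_bdd: "\<exists>B. \<forall>x\<in>cube a b. \<bar>p x\<bar> \<le> B"
    and p_meas: "set_borel_measurable lborel (cube a b) p"
    and phi_meas: "(\<lambda>z. \<phi> (fst z) (snd z))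
                     \<in> borel_measurable (restrict_space borel (UNIV \<times> cube a b))"
    and phi_locbdd: "\<forall>\<theta>. \<exists>e>0. \<exists>B. \<forall>\<eta>\<in>ball \<theta> e. \<forall>x\<in>cube a b. \<bar>\<phi> \<eta> x\<bar> \<le> B"
    and phi_lip: "\<forall>r>0. \<exists>L. \<forall>\<theta> \<eta>. norm \<theta> + norm \<eta> \<le> r \<and> \<theta> \<noteq> \<eta> \<longrightarrow>
                     (\<forall>x\<in>cube a b. \<bar>\<phi> \<theta> x - \<phi> \<eta> x\<bar> / norm (\<theta> - \<eta>) \<le> L)"
  shows "locally_lipschitz_on UNIV (\<lambda>\<theta>. LINT x : cube a b | lborel. \<phi> \<theta> x * p x)
    \<and> (\<forall>i. locally_lipschitz_on {\<eta>. i \<notin> degenerate \<eta>}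
               (\<lambda>\<theta>. LINT x : active_set a b \<theta> i | lborel. \<phi> \<theta> x * p x))"
proof -
  obtain Bp0 where Bp0: "\<forall>x\<in>cube a b. \<bar>p x\<bar> \<le> Bp0" using p_bdd by blast
  define Bp where "Bp = max Bp0 0"
  have Bp: "0 \<le> Bp" unfolding Bp_def by simp
  have P: "\<forall>x\<in>cube a b. 0 \<le> p x \<and> p x \<le> Bp" using Bp0 p_nonneg unfolding Bp_def by force
  have mpp: "(\<lambda>x. indicator (cube a b) x * p x) \<in> borel_measurable lborel"
    using p_meas unfolding set_borel_measurable_def by simp
  have mphi: "\<And>\<theta>. (\<lambda>x. indicator (cube a b) x * \<phi> \<theta> x) \<in> borel_measurable lborel"
    by (rule sec_meas[OF phi_meas])
  note C = cube_sets[of a b]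
  define vol where "vol = measure lborel (cube a b :: (real^'d) set)"
  have vol: "0 \<le> vol" unfolding vol_def by simp
  have lipphi: "\<exists>Lr\<ge>0. \<forall>\<theta>\<in>ball \<theta>0 1. \<forall>\<eta>\<in>ball \<theta>0 1. \<forall>x\<in>(cube a b :: (real^'d) set). \<bar>\<phi> \<theta> x - \<phi> \<eta> x\<bar> \<le> Lr * dist \<theta> \<eta>"
    for \<theta>0 :: "('d, 'h) params"
  proof -
    define r where "r = 2 * (norm \<theta>0 + 1)"
    have "r > 0" unfolding r_def by (simp add: add_nonneg_pos)
    then obtain L where L: "\<forall>\<theta> \<eta>. norm \<theta> + norm \<eta> \<le> r \<and> \<theta> \<noteq> \<eta> \<longrightarrow>
                     (\<forall>x\<in>cube a b. \<bar>\<phi> \<theta> x - \<phi> \<eta> x\<bar> / norm (\<theta> - \<eta>) \<le> L)" using phi_lip by blast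
    show ?thesis
    proof (intro exI[of _ "max L 0"] conjI ballI)
      fix \<theta> \<eta> and x :: "real^'d" assume th: "\<theta> \<in> ball \<theta>0 1" and et: "\<eta> \<in> ball \<theta>0 1" and x: "x \<in> cube a b"
      show "\<bar>\<phi> \<theta> x - \<phi> \<eta> x\<bar> \<le> max L 0 * dist \<theta> \<eta>"
      proof (cases "\<theta> = \<eta>")
        case True then show ?thesis by simp
      next
        case False
        have n1: "norm \<theta> \<le> norm \<theta>0 + norm (\<theta> - \<theta>0)" by (rule norm_triangle_sub)
        have n2: "norm \<eta> \<le> norm \<theta>0 + norm (\<eta> - \<theta>0)" by (rule norm_triangle_sub)
        have "norm (\<theta> - \<theta>0) < 1" "norm (\<eta> - \<theta>0) < 1" using th et
          by (simp_all add: dist_norm norm_minus_commute)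
        then have "norm \<theta> + norm \<eta> \<le> r" using n1 n2 unfolding r_def by argo
        then have "\<bar>\<phi> \<theta> x - \<phi> \<eta> x\<bar> / norm (\<theta> - \<eta>) \<le> L" using L False x by blast
        moreover have "0 < norm (\<theta> - \<eta>)" using False by simp
        ultimately have "\<bar>\<phi> \<theta> x - \<phi> \<eta> x\<bar> \<le> L * norm (\<theta> - \<eta>)" by (simp add: pos_divide_le_eq)
        also have "\<dots> \<le> max L 0 * norm (\<theta> - \<eta>)" by (intro mult_right_mono) auto
        finally show ?thesis by (simp add: dist_norm)
      qed
    qed simp
  qed
  have part1: "locally_lipschitz_on UNIV (\<lambda>\<theta>. LINT x : cube a b | lborel. \<phi> \<theta> x * p x)"
    unfolding locally_lipschitz_on_def
  proof
    fix \<theta>0 :: "('d, 'h) params"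
    obtain Lr where Lr: "0 \<le> Lr" "\<forall>\<theta>\<in>ball \<theta>0 1. \<forall>\<eta>\<in>ball \<theta>0 1. \<forall>x\<in>cube a b. \<bar>\<phi> \<theta> x - \<phi> \<eta> x\<bar> \<le> Lr * dist \<theta> \<eta>"
      using lipphi by blast
    show "\<exists>e>0. \<exists>L. L-lipschitz_on (ball \<theta>0 e \<inter> UNIV) (\<lambda>\<theta>. LINT x : cube a b | lborel. \<phi> \<theta> x * p x)"
    proof (rule exI[of _ 1], intro conjI exI[of _ "Lr * Bp * vol"] lipschitz_onI)
      fix \<theta> \<eta> assume th: "\<theta> \<in> ball \<theta>0 1 \<inter> UNIV" and et: "\<eta> \<in> ball \<theta>0 1 \<inter> UNIV"
      obtain e Bg where "e > 0" "\<forall>\<eta>'\<in>ball \<eta> e. \<forall>x\<in>cube a b. \<bar>\<phi> \<eta>' x\<bar> \<le> Bg" using phi_locbdd by blast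
      then have Bg: "\<forall>x\<in>cube a b. \<bar>\<phi> \<eta> x\<bar> \<le> Bg" by simp
      have Dfact: "\<forall>x\<in>cube a b. \<bar>\<phi> \<theta> x - \<phi> \<eta> x\<bar> \<le> Lr * dist \<theta> \<eta>" using Lr th et by auto
      have "\<bar>(LINT x : cube a b | lborel. \<phi> \<theta> x * p x) - (LINT x : cube a b | lborel. \<phi> \<eta> x * p x)\<bar>
        \<le> Lr * dist \<theta> \<eta> * Bp * measure lborel (cube a b :: (real^'d) set) + Bg * Bp * measure lborel (((cube a b :: (real^'d) set) - cube a b) \<union> (cube a b - cube a b))"
        using key[OF C subset_refl subset_refl C(1) C(1) mphi mphi mpp Dfact Bg P] .
      then show "dist (LINT x : cube a b | lborel. \<phi> \<theta> x * p x) (LINT x : cube a b | lborel. \<phi> \<eta> x * p x)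
         \<le> Lr * Bp * vol * dist \<theta> \<eta>" unfolding vol_def dist_real_def by (simp add: algebra_simps)
    qed (use Lr Bp vol in auto)
  qed
  have part2: "locally_lipschitz_on {\<eta>. i \<notin> degenerate \<eta>}
               (\<lambda>\<theta>. LINT x : active_set a b \<theta> i | lborel. \<phi> \<theta> x * p x)" for i
    unfolding locally_lipschitz_on_def
  proof
    fix \<theta>0 :: "('d, 'h) params" assume "\<theta>0 \<in> {\<eta>. i \<notin> degenerate \<eta>}"
    then have nd: "i \<notin> degenerate \<theta>0" by simp
    obtain \<epsilon> Cm where eps: "\<epsilon> > 0" "Cm \<ge> 0" and dm: "\<forall>\<theta>\<in>ball \<theta>0 \<epsilon>. \<forall>\<eta>\<in>ball \<theta>0 \<epsilon>.
     measure lborel ((active_set a b \<theta> i - active_set a b \<eta> i) \<union> (active_set a b \<eta> i - active_set a b \<theta> i))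
       \<le> Cm * dist \<theta> \<eta>" using delta_meas[OF ab nd] by blast
    obtain e0 B0 where e0: "e0 > 0" and B0: "\<forall>\<eta>\<in>ball \<theta>0 e0. \<forall>x\<in>cube a b. \<bar>\<phi> \<eta> x\<bar> \<le> B0"
      using phi_locbdd by blast
    define Bf where "Bf = max B0 0"
    have Bf: "0 \<le> Bf" unfolding Bf_def by simp
    obtain Lr where Lr: "0 \<le> Lr" "\<forall>\<theta>\<in>ball \<theta>0 1. \<forall>\<eta>\<in>ball \<theta>0 1. \<forall>x\<in>cube a b. \<bar>\<phi> \<theta> x - \<phi> \<eta> x\<bar> \<le> Lr * dist \<theta> \<eta>"
      using lipphi by blast
    define e where "e = min (min \<epsilon> e0) 1"
    have e: "0 < e" unfolding e_def using eps e0 by simp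
    show "\<exists>e>0. \<exists>L. L-lipschitz_on (ball \<theta>0 e \<inter> {\<eta>. i \<notin> degenerate \<eta>})
       (\<lambda>\<theta>. LINT x : active_set a b \<theta> i | lborel. \<phi> \<theta> x * p x)"
    proof (rule exI[of _ e], intro conjI exI[of _ "Lr * Bp * vol + Bf * Bp * Cm"] lipschitz_onI)
      fix \<theta> \<eta> assume th: "\<theta> \<in> ball \<theta>0 e \<inter> {\<eta>. i \<notin> degenerate \<eta>}" and et: "\<eta> \<in> ball \<theta>0 e \<inter> {\<eta>. i \<notin> degenerate \<eta>}"
      have th1: "\<theta> \<in> ball \<theta>0 1" "\<theta> \<in> ball \<theta>0 \<epsilon>" "\<theta> \<in> ball \<theta>0 e0" using th unfolding e_def by auto
      have et1: "\<eta> \<in> ball \<theta>0 1" "\<eta> \<in> ball \<theta>0 \<epsilon>" "\<eta> \<in> ball \<theta>0 e0" using et unfolding e_def by auto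
      have Bg: "\<forall>x\<in>cube a b. \<bar>\<phi> \<eta> x\<bar> \<le> Bf" using B0 et1(3) unfolding Bf_def by force
      have sub: "active_set a b \<theta>' i \<subseteq> cube a b" for \<theta>' unfolding active_set_def by auto
      have Dfact: "\<forall>x\<in>cube a b. \<bar>\<phi> \<theta> x - \<phi> \<eta> x\<bar> \<le> Lr * dist \<theta> \<eta>" using Lr th1 et1 by auto
      have "\<bar>(LINT x : active_set a b \<theta> i | lborel. \<phi> \<theta> x * p x) - (LINT x : active_set a b \<eta> i | lborel. \<phi> \<eta> x * p x)\<bar>
        \<le> Lr * dist \<theta> \<eta> * Bp * measure lborel (cube a b :: (real^'d) set) + Bf * Bp * measure lborel ((active_set a b \<theta> i - active_set a b \<eta> i) \<union> (active_set a b \<eta> i - active_set a b \<theta> i))"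
        using key[OF C sub sub act_sets act_sets mphi mphi mpp Dfact Bg P] .
      also have "\<dots> \<le> Lr * dist \<theta> \<eta> * Bp * measure lborel (cube a b :: (real^'d) set) + Bf * Bp * (Cm * dist \<theta> \<eta>)"
        using dm th1 et1 Bf Bp by (intro add_left_mono mult_left_mono) auto
      finally show "dist (LINT x : active_set a b \<theta> i | lborel. \<phi> \<theta> x * p x) (LINT x : active_set a b \<eta> i | lborel. \<phi> \<eta> x * p x)
         \<le> (Lr * Bp * vol + Bf * Bp * Cm) * dist \<theta> \<eta>" unfolding vol_def dist_real_def by (simp add: algebra_simps)
    qed (use e Lr Bp vol Bf eps in auto)
  qed
  show ?thesis using part1 part2 by blast
qed

end
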